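(* Consider the linear time-invariant system $\dot{x}(t) = A x(t) + B u(t) + E w(t)$ with $A \in \mathbb{R}^{n\times n}$, $B \in \mathbb{R}^{n\times m}$, $E \in \mathbb{R}^{n\times r}$, input set $\mathcal{U}\subset\mathbb{R}^m$ and disturbance set $\mathcal{W}\subset\mathbb{R}^r$ (both zonotopes), and a target set $\mathcal{X}_{\text{end}}\subset\mathbb{R}^n$ given as a polytope. For every time $t\in[0,t_{\text{end}}]$, the time-point EA backward reachable set $$\mathcal{R}^{\exists\forall}(-t) := \big\{ x_0 \in \mathbb{R}^n \,\big|\, \exists u(\cdot)\in\mathbb{U}\; \forall w(\cdot)\in\mathbb{W}\colon \xi(t;x_0,u(\cdot),w(\cdot)) \in \mathcal{X}_{\text{end}} \big\}$$ satisfies $$\mathcal{R}^{\exists\forall}(-t) = e^{-At}\Big( \big( \mathcal{X}_{\text{end}} \ominus \mathcal{Z}_{\mathcal{W}}(t) \big) \oplus -\mathcal{Z}_{\mathcal{U}}(t) \Big).$$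
   Context: $\mathbb{U}$ is the set of all (measurable) input trajectories $u:[0,t_{\text{end}}]\to\mathcal{U}$ and $\mathbb{W}$ the set of all (measurable) disturbance trajectories $w:[0,t_{\text{end}}]\to\mathcal{W}$. $\xi(t;x_0,u(\cdot),w(\cdot)) = e^{At}x_0 + \int_0^t e^{A(t-\theta)}(Bu(\theta)+Ew(\theta))\,\mathrm{d}\theta$ is the solution at time $t$. For a set $\mathcal{S}\subset\mathbb{R}^n$, the particular solution is $\mathcal{Z}_{\mathcal{S}}(t) := \{\int_0^t e^{A(t-\theta)} s(\theta)\,\mathrm{d}\theta \mid s(\theta)\in\mathcal{S}\}$ (over measurable $s$), and $\mathcal{Z}_{\mathcal{U}}(t) := \mathcal{Z}_{B\mathcal{U}}(t)$, $\mathcal{Z}_{\mathcal{W}}(t) := \mathcal{Z}_{E\mathcal{W}}(t)$. Set operations: $M\mathcal{S} = \{Ms \mid s\in\mathcal{S}\}$; $-\mathcal{S} = \{-s\mid s\in\mathcal{S}\}$; Minkowski sum $\mathcal{S}_1\oplus\mathcal{S}_2 = \{s_1+s_2\mid s_1\in\mathcal{S}_1, s_2\in\mathcal{S}_2\}$; Minkowski difference $\mathcal{S}_1\ominus\mathcal{S}_2 = \{s \mid \{s\}\oplus\mathcal{S}_2\subseteq\mathcal{S}_1\}$. A zonotope is $\{c+\sum_{i=1}^{\gamma} G_{(\cdot,i)}\alpha_i \mid \alpha_i\in[-1,1]\}$; a polytope is $\{s \mid Ns\le d\}$. *)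

theory Defs
  imports "HOL-Analysis.Analysis"
begin

fun mat_pow :: "real^'n^'n \<Rightarrow> nat \<Rightarrow> real^'n^'n" where
  "mat_pow M 0 = mat 1"
| "mat_pow M (Suc k) = M ** mat_pow M k"

definition mat_exp :: "real^'n^'n \<Rightarrow> real^'n^'n" where
  "mat_exp M = (\<Sum>k. (1 / fact k) *\<^sub>R mat_pow M k)"

definition mink_sum :: "('a::ab_group_add) set \<Rightarrow> 'a set \<Rightarrow> 'a set" (infixl "\<oplus>\<^sub>M" 65) where
  "S1 \<oplus>\<^sub>M S2 = {s1 + s2 | s1 s2. s1 \<in> S1 \<and> s2 \<in> S2}"

definition mink_diff :: "('a::ab_group_add) set \<Rightarrow> 'a set \<Rightarrow> 'a set" (infixl "\<ominus>\<^sub>M" 65) where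
  "S1 \<ominus>\<^sub>M S2 = {s. {s} \<oplus>\<^sub>M S2 \<subseteq> S1}"

definition lin_image :: "real^'m^'n \<Rightarrow> (real^'m) set \<Rightarrow> (real^'n) set" where
  "lin_image M S = {M *v s | s. s \<in> S}"

definition zonotope :: "('a::real_vector) set \<Rightarrow> bool" where
  "zonotope S \<longleftrightarrow> (\<exists>c gs. S = {c + (\<Sum>i<length gs. \<alpha> i *\<^sub>R gs ! i) | \<alpha>. \<forall>i<length gs. \<bar>\<alpha> i\<bar> \<le> 1})"

definition polytope_H :: "('a::real_inner) set \<Rightarrow> bool" where
  "polytope_H S \<longleftrightarrow> (\<exists>rows :: ('a \<times> real) list. S = {s. \<forall>(a, b) \<in> set rows. a \<bullet> s \<le> b})"

definition trajectories :: "real \<Rightarrow> ('a::euclidean_space) set \<Rightarrow> (real \<Rightarrow> 'a) set" where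
  "trajectories T S = {f. f \<in> borel_measurable (lebesgue_on {0..T}) \<and> (\<forall>\<theta>\<in>{0..T}. f \<theta> \<in> S)}"

definition particular_solution :: "real^'n^'n \<Rightarrow> (real^'n) set \<Rightarrow> real \<Rightarrow> (real^'n) set" where
  "particular_solution A S t =
     {integral {0..t} (\<lambda>\<theta>. mat_exp ((t - \<theta>) *\<^sub>R A) *v s \<theta>) | s. s \<in> trajectories t S}"

definition xi :: "real^'n^'n \<Rightarrow> real^'m^'n \<Rightarrow> real^'r^'n \<Rightarrow> real \<Rightarrow> real^'n
                  \<Rightarrow> (real \<Rightarrow> real^'m) \<Rightarrow> (real \<Rightarrow> real^'r) \<Rightarrow> real^'n" where
  "xi A B E t x0 u w = mat_exp (t *\<^sub>R A) *v x0
     + integral {0..t} (\<lambda>\<theta>. mat_exp ((t - \<theta>) *\<^sub>R A) *v (B *v u \<theta> + E *v w \<theta>))"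

definition EA_backward_reach ::
  "real^'n^'n \<Rightarrow> real^'m^'n \<Rightarrow> real^'r^'n \<Rightarrow> (real^'m) set \<Rightarrow> (real^'r) set
   \<Rightarrow> (real^'n) set \<Rightarrow> real \<Rightarrow> real \<Rightarrow> (real^'n) set" where
  "EA_backward_reach A B E U W Xend t_end t =
     {x0. \<exists>u \<in> trajectories t_end U. \<forall>w \<in> trajectories t_end W. xi A B E t x0 u w \<in> Xend}"

end

theory Submission
  imports Defs
begin

lemma mp_add: "mat_pow X a ** mat_pow X b = mat_pow X (a + b)"
  by (induction a) (auto simp: matrix_mul_assoc[symmetric])

lemma mp_scale: "mat_pow (r *\<^sub>R X) k = (r ^ k) *\<^sub>R mat_pow X k"
  by (induction k) (auto simp: matrix_scalar_ac scalar_matrix_assoc mult.commute)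

lemma mp_entry_bound:
  fixes X :: "real^'n^'n"
  shows "\<bar>mat_pow X k $ i $ j\<bar> \<le> (real CARD('n) * norm X) ^ k"
proof (induction k arbitrary: i j)
  case 0
  then show ?case by (simp add: mat_def)
next
  case (Suc k)
  have "\<bar>mat_pow X (Suc k) $ i $ j\<bar> = \<bar>\<Sum>l\<in>UNIV. X $ i $ l * mat_pow X k $ l $ j\<bar>"
    by (simp add: matrix_matrix_mult_def)
  also have "\<dots> \<le> (\<Sum>l\<in>(UNIV::'n set). \<bar>X $ i $ l\<bar> * \<bar>mat_pow X k $ l $ j\<bar>)"
    by (rule order_trans[OF sum_abs]) (simp add: abs_mult)
  also have "\<dots> \<le> (\<Sum>l\<in>(UNIV::'n set). norm X * (real CARD('n) * norm X) ^ k)"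
  proof (rule sum_mono)
    fix l
    have a: "\<bar>X $ i $ l\<bar> \<le> norm (X $ i)" by (rule component_le_norm_cart)
    have b: "norm (X $ i) \<le> norm X" by (rule Finite_Cartesian_Product.norm_nth_le)
    from a b have "\<bar>X $ i $ l\<bar> \<le> norm X" by linarith
    then show "\<bar>X $ i $ l\<bar> * \<bar>mat_pow X k $ l $ j\<bar> \<le> norm X * (real CARD('n) * norm X) ^ k"
      using Suc by (intro mult_mono) auto
  qed
  also have "\<dots> = (real CARD('n) * norm X) ^ Suc k" by simp
  finally show ?case .
qed

definition cN :: "real^'n^'n \<Rightarrow> real" where "cN X = real CARD('n) * norm X"

lemma cN_nonneg: "cN X \<ge> 0" by (simp add: cN_def)

lemma summable_expc: "summable (\<lambda>k. (c::real) ^ k / fact k)"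
  using summable_exp[of c] by (simp add: field_simps)

lemma entry_abs_summable:
  fixes X :: "real^'n^'n"
  shows "summable (\<lambda>k. \<bar>(1 / fact k) * mat_pow X k $ i $ j\<bar>)"
proof (rule summable_comparison_test'[OF summable_expc[of "cN X"]])
  fix k :: nat
  show "norm \<bar>(1 / fact k) * mat_pow X k $ i $ j\<bar> \<le> cN X ^ k / fact k"
    using mp_entry_bound[of X k i j] by (simp add: cN_def abs_mult divide_right_mono)
qed

lemma norm_le_entries:
  fixes M :: "real^'n^'m"
  shows "norm M \<le> (\<Sum>i\<in>UNIV. \<Sum>j\<in>UNIV. \<bar>M $ i $ j\<bar>)"
proof -
  have "norm M \<le> (\<Sum>i\<in>UNIV. norm (M $ i))"
    unfolding norm_vec_def by (rule L2_set_le_sum) simp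
  also have "\<dots> \<le> (\<Sum>i\<in>UNIV. \<Sum>j\<in>UNIV. \<bar>M $ i $ j\<bar>)"
    by (intro sum_mono norm_le_l1_cart)
  finally show ?thesis .
qed

lemma mat_exp_series_summable:
  fixes X :: "real^'n^'n"
  shows "summable (\<lambda>k. (1 / fact k) *\<^sub>R mat_pow X k)"
proof (rule summable_norm_cancel, rule summable_comparison_test'[OF summable_mult[OF summable_expc[of "cN X"], of "real CARD('n) * real CARD('n)"]])
  fix k :: nat
  have "norm (norm ((1 / fact k) *\<^sub>R mat_pow X k)) \<le> (\<Sum>i\<in>(UNIV::'n set). \<Sum>j\<in>(UNIV::'n set). \<bar>((1 / fact k) *\<^sub>R mat_pow X k) $ i $ j\<bar>)"
    using norm_le_entries[of "(1 / fact k) *\<^sub>R mat_pow X k"] by simp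
  also have "\<dots> \<le> (\<Sum>i\<in>(UNIV::'n set). \<Sum>j\<in>(UNIV::'n set). cN X ^ k / fact k)"
    using mp_entry_bound[of X k] by (intro sum_mono) (simp add: cN_def abs_mult divide_right_mono)
  also have "\<dots> = real CARD('n) * real CARD('n) * (cN X ^ k / fact k)" by simp
  finally show "norm (norm ((1 / fact k) *\<^sub>R mat_pow X k)) \<le> real CARD('n) * real CARD('n) * (cN X ^ k / fact k)" .
qed

lemma mat_exp_entry:
  fixes X :: "real^'n^'n"
  shows "mat_exp X $ i $ j = (\<Sum>k. (1 / fact k) * mat_pow X k $ i $ j)"
proof -
  have bl: "bounded_linear (\<lambda>M::real^'n^'n. M $ i $ j)"
    using bounded_linear_compose[OF bounded_linear_vec_nth[of j] bounded_linear_vec_nth[of i]] by simp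
  show ?thesis
    unfolding mat_exp_def using bounded_linear.suminf[OF bl mat_exp_series_summable[of X]] by simp
qed

lemma alt_fact_sum:
  "(\<Sum>a\<le>k. (-1::real) ^ a / (fact a * fact (k - a))) = (if k = 0 then 1 else 0)"
proof -
  have "(\<Sum>a\<le>k. (-1::real) ^ a / (fact a * fact (k - a))) = (\<Sum>a\<le>k. (-1) ^ a * of_nat (k choose a)) / fact k"
    unfolding sum_divide_distrib
    by (intro sum.cong refl) (simp add: binomial_fact)
  also have "\<dots> = (if k = 0 then 1 else 0)"
    using choose_alternating_sum[of k, where 'a=real] by auto
  finally show ?thesis .
qed

lemma mp_neg: "mat_pow (- X) a = (-1) ^ a *\<^sub>R mat_pow X a"
  using mp_scale[of "-1" X a] by simp

lemma mat_exp_inv: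
  fixes X :: "real^'n^'n"
  shows "mat_exp (- X) ** mat_exp X = mat 1"
proof -
  have "(mat_exp (- X) ** mat_exp X) $ i $ j = mat 1 $ i $ j" for i j
  proof -
    define p where "p l a = (1 / fact a) * mat_pow (- X) a $ i $ l" for l a
    define q where "q l b = (1 / fact b) * mat_pow X b $ l $ j" for l b
    have sp: "summable (\<lambda>k. norm (p l k))" for l
      unfolding p_def real_norm_def by (rule entry_abs_summable)
    have sq: "summable (\<lambda>k. norm (q l k))" for l
      unfolding q_def real_norm_def by (rule entry_abs_summable)
    have "(mat_exp (- X) ** mat_exp X) $ i $ j = (\<Sum>l\<in>UNIV. mat_exp (- X) $ i $ l * mat_exp X $ l $ j)"
      unfolding matrix_matrix_mult_def by (rule vec_lambda_beta[THEN arg_cong[where f="\<lambda>v. v $ j"], THEN trans]) simp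
    also have "\<dots> = (\<Sum>l\<in>UNIV. (\<Sum>a. p l a) * (\<Sum>b. q l b))"
      by (simp only: mat_exp_entry p_def q_def)
    also have "\<dots> = (\<Sum>l\<in>UNIV. \<Sum>k. \<Sum>a\<le>k. p l a * q l (k - a))"
      using Cauchy_product[OF sp sq] by simp
    also have "\<dots> = (\<Sum>k. \<Sum>l\<in>UNIV. \<Sum>a\<le>k. p l a * q l (k - a))"
      by (rule suminf_sum[symmetric]) (rule summable_Cauchy_product[OF sp sq])
    also have "\<dots> = (\<Sum>k. if k = 0 then mat 1 $ i $ j else 0)"
    proof (rule arg_cong[where f=suminf], rule ext)
      fix k
      have "(\<Sum>l\<in>UNIV. \<Sum>a\<le>k. p l a * q l (k - a))
          = (\<Sum>a\<le>k. ((-1) ^ a / (fact a * fact (k - a))) * (\<Sum>l\<in>UNIV. mat_pow X a $ i $ l * mat_pow X (k - a) $ l $ j))"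
      proof -
        have e: "p l a * q l (k - a) = ((-1) ^ a / (fact a * fact (k - a))) * (mat_pow X a $ i $ l * mat_pow X (k - a) $ l $ j)" for l a
          by (simp add: p_def q_def mp_neg)
        show ?thesis
          unfolding e sum_distrib_left by (rule sum.swap)
      qed
      also have "\<dots> = (\<Sum>a\<le>k. ((-1) ^ a / (fact a * fact (k - a))) * mat_pow X k $ i $ j)"
      proof (intro sum.cong refl)
        fix a assume "a \<in> {..k}"
        then have "mat_pow X a ** mat_pow X (k - a) = mat_pow X k"
          by (simp add: mp_add)
        then have "mat_pow X k $ i $ j = (mat_pow X a ** mat_pow X (k - a)) $ i $ j" by simp
        also have "\<dots> = (\<Sum>l\<in>UNIV. mat_pow X a $ i $ l * mat_pow X (k - a) $ l $ j)"
          unfolding matrix_matrix_mult_def by simp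
        finally show "((-1) ^ a / (fact a * fact (k - a))) * (\<Sum>l\<in>UNIV. mat_pow X a $ i $ l * mat_pow X (k - a) $ l $ j)
            = ((-1) ^ a / (fact a * fact (k - a))) * mat_pow X k $ i $ j"
          by simp
      qed
      also have "\<dots> = (if k = 0 then mat 1 $ i $ j else 0)"
        unfolding sum_distrib_right[symmetric] alt_fact_sum by simp
      finally show "(\<Sum>l\<in>UNIV. \<Sum>a\<le>k. p l a * q l (k - a)) = (if k = 0 then mat 1 $ i $ j else 0)" .
    qed
    also have "\<dots> = mat 1 $ i $ j"
      using sums_unique[OF sums_single[of 0 "\<lambda>_. mat 1 $ i $ j"]] by (rule sym)
    finally show ?thesis .
  qed
  then show ?thesis by (simp add: vec_eq_iff)
qed

lemma mat_exp_scale_entry: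
  fixes A :: "real^'n^'n"
  shows "mat_exp (r *\<^sub>R A) $ i $ j = (\<Sum>k. (mat_pow A k $ i $ j / fact k) * r ^ k)"
  unfolding mat_exp_entry mp_scale by (simp add: mult_ac)

lemma entry_cont:
  fixes A :: "real^'n^'n"
  shows "continuous_on UNIV (\<lambda>r. mat_exp (r *\<^sub>R A) $ i $ j)"
proof -
  have s: "summable (\<lambda>n. (mat_pow A n $ i $ j / fact n) * y ^ n)" for y :: real
  proof (rule summable_comparison_test'[OF summable_expc[of "cN A * \<bar>y\<bar>"]])
    fix n :: nat
    have "\<bar>mat_pow A n $ i $ j\<bar> * \<bar>y\<bar> ^ n \<le> cN A ^ n * \<bar>y\<bar> ^ n"
      using mp_entry_bound[of A n i j] by (intro mult_right_mono) (auto simp: cN_def)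
    then show "norm ((mat_pow A n $ i $ j / fact n) * y ^ n) \<le> (cN A * \<bar>y\<bar>) ^ n / fact n"
      by (simp add: abs_mult power_abs power_mult_distrib divide_right_mono)
  qed
  show ?thesis
    unfolding mat_exp_scale_entry
    by (intro continuous_at_imp_continuous_on ballI isCont_powser_converges_everywhere s)
qed

lemma mat_exp_cont:
  fixes A :: "real^'n^'n"
  shows "continuous_on S (\<lambda>\<theta>. mat_exp ((t - \<theta>) *\<^sub>R A))"
proof -
  have c: "continuous_on S (\<lambda>\<theta>. mat_exp ((t - \<theta>) *\<^sub>R A) $ i $ j)" for i j
  proof -
    have "continuous_on S (\<lambda>\<theta>. t - \<theta>)" by (intro continuous_intros)
    from continuous_on_compose2[OF entry_cont[of A i j] this] show ?thesis by simp
  qed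
  have "continuous_on S (\<lambda>\<theta>. \<chi> i j. mat_exp ((t - \<theta>) *\<^sub>R A) $ i $ j)"
    by (intro continuous_on_vec_lambda c)
  then show ?thesis by (simp add: vec_lambda_eta)
qed

lemma meas_nth:
  assumes "v \<in> borel_measurable M"
  shows "(\<lambda>x. (v x :: 'a::real_normed_vector^'n) $ j) \<in> borel_measurable M"
proof -
  have "(\<lambda>y::'a^'n. y $ j) \<in> borel_measurable borel"
    by (rule borel_measurable_continuous_onI, rule continuous_on_component, rule continuous_on_id)
  from measurable_compose[OF assms this] show ?thesis by simp
qed

lemma meas_cart:
  fixes f :: "'b \<Rightarrow> real^'n"
  assumes "\<And>i. (\<lambda>x. f x $ i) \<in> borel_measurable M"
  shows "f \<in> borel_measurable M"
proof (rule borel_measurable_euclidean_space[THEN iffD2], rule ballI)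
  fix b :: "real^'n" assume "b \<in> Basis"
  then obtain i u where "u \<in> (Basis::real set)" "b = axis i u" unfolding Basis_vec_def by blast
  then have b: "b = axis i 1" by simp
  have "(\<lambda>x. f x \<bullet> b) = (\<lambda>x. f x $ i)"
    unfolding b inner_axis by simp
  then show "(\<lambda>x. f x \<bullet> b) \<in> borel_measurable M"
    using assms[of i] by simp
qed

lemma integrand_meas:
  fixes A :: "real^'n^'n" and v :: "real \<Rightarrow> real^'n"
  assumes v: "v \<in> borel_measurable (lebesgue_on {0..t})"
  shows "(\<lambda>\<theta>. mat_exp ((t - \<theta>) *\<^sub>R A) *v v \<theta>) \<in> borel_measurable (lebesgue_on {0..t})"
proof (rule meas_cart)
  fix i
  have e: "(\<lambda>\<theta>. mat_exp ((t - \<theta>) *\<^sub>R A) $ i $ j) \<in> borel_measurable (lebesgue_on {0..t})" for j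
  proof (rule continuous_imp_measurable_on_sets_lebesgue)
    show "continuous_on {0..t} (\<lambda>\<theta>. mat_exp ((t - \<theta>) *\<^sub>R A) $ i $ j)"
      by (intro bounded_linear.continuous_on[OF bounded_linear_vec_nth]
          bounded_linear.continuous_on[OF bounded_linear_vec_nth] mat_exp_cont)
  qed simp
  have "(\<lambda>\<theta>. \<Sum>j\<in>UNIV. mat_exp ((t - \<theta>) *\<^sub>R A) $ i $ j * v \<theta> $ j) \<in> borel_measurable (lebesgue_on {0..t})"
    by (intro borel_measurable_sum borel_measurable_times e meas_nth v)
  then show "(\<lambda>\<theta>. (mat_exp ((t - \<theta>) *\<^sub>R A) *v v \<theta>) $ i) \<in> borel_measurable (lebesgue_on {0..t})"
    by (simp add: matrix_vector_mult_def)
qed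

lemma mat_exp_bounded:
  fixes A :: "real^'n^'n"
  obtains C where "C \<ge> 0" "\<And>\<theta> x. \<theta> \<in> {0..t} \<Longrightarrow> norm (mat_exp ((t - \<theta>) *\<^sub>R A) *v x) \<le> C * norm x"
proof -
  have "compact ((\<lambda>\<theta>. mat_exp ((t - \<theta>) *\<^sub>R A)) ` {0..t})"
    by (intro compact_continuous_image mat_exp_cont compact_Icc)
  then obtain BM where BM: "\<And>\<theta>. \<theta> \<in> {0..t} \<Longrightarrow> norm (mat_exp ((t - \<theta>) *\<^sub>R A)) \<le> BM"
    by (meson compact_imp_bounded bounded_iff imageI)
  define C where "C = real CARD('n) * real CARD('n) * BM"
  have Cb: "norm (mat_exp ((t - \<theta>) *\<^sub>R A) *v x) \<le> C * norm x" if "\<theta> \<in> {0..t}" for \<theta> x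
  proof -
    have "\<bar>mat_exp ((t - \<theta>) *\<^sub>R A) $ i $ j\<bar> \<le> BM" for i j
    proof -
      have "\<bar>mat_exp ((t - \<theta>) *\<^sub>R A) $ i $ j\<bar> \<le> norm (mat_exp ((t - \<theta>) *\<^sub>R A) $ i)"
        by (rule component_le_norm_cart)
      also have "\<dots> \<le> norm (mat_exp ((t - \<theta>) *\<^sub>R A))"
        by (rule Finite_Cartesian_Product.norm_nth_le)
      finally show ?thesis using BM[OF that] by linarith
    qed
    then have o: "onorm ((*v) (mat_exp ((t - \<theta>) *\<^sub>R A))) \<le> C"
      unfolding C_def by (rule onorm_le_matrix_component)
    have "norm (mat_exp ((t - \<theta>) *\<^sub>R A) *v x) \<le> onorm ((*v) (mat_exp ((t - \<theta>) *\<^sub>R A))) * norm x"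
      by (rule onorm) simp
    also have "\<dots> \<le> C * norm x"
      by (intro mult_right_mono o) simp
    finally show ?thesis .
  qed
  show ?thesis
  proof (rule that[of "max C 0"])
    fix \<theta> x assume "\<theta> \<in> {0..t}"
    from Cb[OF this, of x] show "norm (mat_exp ((t - \<theta>) *\<^sub>R A) *v x) \<le> max C 0 * norm x"
      by (meson max.cobounded1 mult_right_mono norm_ge_zero order_trans)
  qed simp
qed

lemma integrand_int:
  fixes A :: "real^'n^'n" and v :: "real \<Rightarrow> real^'n"
  assumes v: "v \<in> borel_measurable (lebesgue_on {0..t})"
    and R: "\<And>\<theta>. \<theta> \<in> {0..t} \<Longrightarrow> norm (v \<theta>) \<le> R"
  shows "(\<lambda>\<theta>. mat_exp ((t - \<theta>) *\<^sub>R A) *v v \<theta>) integrable_on {0..t}"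
proof -
  obtain C where C: "C \<ge> 0" "\<And>\<theta> x. \<theta> \<in> {0..t} \<Longrightarrow> norm (mat_exp ((t - \<theta>) *\<^sub>R A) *v x) \<le> C * norm x"
    using mat_exp_bounded by blast
  show ?thesis
  proof (rule measurable_bounded_by_integrable_imp_integrable[OF integrand_meas[OF v]])
    show "(\<lambda>\<theta>. C * R) integrable_on {0..t}" by (rule Henstock_Kurzweil_Integration.integrable_const_ivl)
    fix \<theta> :: real assume th: "\<theta> \<in> {0..t}"
    show "norm (mat_exp ((t - \<theta>) *\<^sub>R A) *v v \<theta>) \<le> C * R"
      using C(2)[OF th, of "v \<theta>"] R[OF th] C(1) by (meson mult_left_mono order_trans)
  qed simp
qed

definition Zk :: "'a::real_vector \<Rightarrow> 'a list \<Rightarrow> nat \<Rightarrow> 'a set" where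
  "Zk c gs k = {c + (\<Sum>i<k. \<alpha> i *\<^sub>R gs ! i) | \<alpha>. \<forall>i<k. \<bar>\<alpha> i\<bar> \<le> 1}"

lemma Zk_0: "Zk c gs 0 = {c}"
  unfolding Zk_def by auto

lemma Zk_Suc: "Zk c gs (Suc k) = (\<Union>x\<in>Zk c gs k. \<Union>y\<in>(\<lambda>a. a *\<^sub>R gs ! k) ` {-1..1}. {x + y})"
proof (intro set_eqI iffI)
  fix z assume "z \<in> Zk c gs (Suc k)"
  then obtain \<alpha> where z: "z = c + (\<Sum>i<Suc k. \<alpha> i *\<^sub>R gs ! i)" and a: "\<forall>i<Suc k. \<bar>\<alpha> i\<bar> \<le> 1"
    unfolding Zk_def by blast
  have "c + (\<Sum>i<k. \<alpha> i *\<^sub>R gs ! i) \<in> Zk c gs k"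
    unfolding Zk_def using a by auto
  moreover have "\<alpha> k *\<^sub>R gs ! k \<in> (\<lambda>a. a *\<^sub>R gs ! k) ` {-1..1}"
  proof (rule imageI)
    show "\<alpha> k \<in> {-1..1}" using a by (simp add: abs_le_iff)
  qed
  moreover have "z = (c + (\<Sum>i<k. \<alpha> i *\<^sub>R gs ! i)) + \<alpha> k *\<^sub>R gs ! k"
    using z by (simp add: add.assoc)
  ultimately show "z \<in> (\<Union>x\<in>Zk c gs k. \<Union>y\<in>(\<lambda>a. a *\<^sub>R gs ! k) ` {-1..1}. {x + y})"
    by blast
next
  fix z assume "z \<in> (\<Union>x\<in>Zk c gs k. \<Union>y\<in>(\<lambda>a. a *\<^sub>R gs ! k) ` {-1..1}. {x + y})"
  then obtain \<alpha> b where a: "\<forall>i<k. \<bar>\<alpha> i\<bar> \<le> 1" and b: "b \<in> {-1..1}"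
    and z: "z = (c + (\<Sum>i<k. \<alpha> i *\<^sub>R gs ! i)) + b *\<^sub>R gs ! k"
    unfolding Zk_def by blast
  define \<beta> where "\<beta> = \<alpha>(k := b)"
  have "(\<Sum>i<k. \<beta> i *\<^sub>R gs ! i) = (\<Sum>i<k. \<alpha> i *\<^sub>R gs ! i)"
    by (intro sum.cong) (auto simp: \<beta>_def)
  then have "z = c + (\<Sum>i<Suc k. \<beta> i *\<^sub>R gs ! i)"
    using z by (simp add: \<beta>_def add.assoc)
  moreover have "\<forall>i<Suc k. \<bar>\<beta> i\<bar> \<le> 1"
    using a b by (auto simp: \<beta>_def less_Suc_eq)
  ultimately show "z \<in> Zk c gs (Suc k)"
    unfolding Zk_def by blast
qed

lemma Zk_props:
  fixes c :: "'a::euclidean_space"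
  shows "compact (Zk c gs k) \<and> convex (Zk c gs k) \<and> Zk c gs k \<noteq> {}"
proof (induction k)
  case 0
  then show ?case by (simp add: Zk_0)
next
  case (Suc k)
  have seg: "compact ((\<lambda>a. a *\<^sub>R gs ! k) ` {-1..1::real})" "convex ((\<lambda>a. a *\<^sub>R gs ! k) ` {-1..1::real})"
  proof -
    have l: "linear (\<lambda>a::real. a *\<^sub>R gs ! k)" by (rule linear_scaleR_left)
    show "compact ((\<lambda>a. a *\<^sub>R gs ! k) ` {-1..1::real})"
      by (rule compact_continuous_image[OF linear_continuous_on[OF bounded_linear_scaleR_left] compact_Icc])
    show "convex ((\<lambda>a. a *\<^sub>R gs ! k) ` {-1..1::real})"
      by (rule convex_linear_image[OF l convex_real_interval(5)])
  qed
  have ne: "(\<lambda>a. a *\<^sub>R gs ! k) ` {-1..1::real} \<noteq> {}" by simp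
  from Suc have A: "compact (Zk c gs k)" "convex (Zk c gs k)" "Zk c gs k \<noteq> {}" by auto
  show ?case unfolding Zk_Suc
    using compact_sums'[OF A(1) seg(1)] convex_sums[OF A(2) seg(2)] A(3) ne by blast
qed

lemma zonotope_props:
  fixes S :: "'a::euclidean_space set"
  assumes "zonotope S"
  shows "compact S" "convex S" "S \<noteq> {}"
proof -
  obtain c gs where "S = Zk c gs (length gs)"
    using assms unfolding zonotope_def Zk_def by blast
  then show "compact S" "convex S" "S \<noteq> {}" using Zk_props by auto
qed

lemma lin_image_eq: "lin_image M S = (\<lambda>x. M *v x) ` S"
  unfolding lin_image_def by auto

lemma lin_image_props:
  fixes M :: "real^'m^'n"
  assumes "compact S" "convex S" "S \<noteq> {}"
  shows "compact (lin_image M S)" "convex (lin_image M S)" "lin_image M S \<noteq> {}"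
  unfolding lin_image_eq
    apply (rule compact_continuous_image[OF linear_continuous_on[OF matrix_vector_mul_bounded_linear] assms(1)])
   apply (rule convex_linear_image[OF matrix_vector_mul_linear assms(2)])
  using assms(3) by simp

lemma lin_imageI: "s \<in> S \<Longrightarrow> M *v s = y \<Longrightarrow> y \<in> lin_image M S"
  unfolding lin_image_def by blast

lemma lin_imageE: "y \<in> lin_image M S \<Longrightarrow> (\<And>s. s \<in> S \<Longrightarrow> M *v s = y \<Longrightarrow> P) \<Longrightarrow> P"
  unfolding lin_image_def by blast

lemma parallelogram:
  fixes u v :: "'a::real_inner"
  shows "norm (u + v)^2 + norm (u - v)^2 = 2 * norm u ^ 2 + 2 * norm v ^ 2"
  by (simp add: power2_norm_eq_inner inner_add_left inner_add_right inner_diff_left inner_diff_right inner_commute)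

lemma mn_unique:
  fixes u u' :: "'a::real_inner"
  assumes S: "convex S" and u: "u \<in> S" and u': "u' \<in> S"
    and mu: "\<forall>v\<in>S. norm u \<le> norm v" and mu': "\<forall>v\<in>S. norm u' \<le> norm v"
  shows "u = u'"
proof -
  have w: "(1/2) *\<^sub>R u + (1/2) *\<^sub>R u' \<in> S"
    by (rule convexD[OF S u u']) auto
  have e: "norm u = norm u'" using mu u' mu' u by (intro order_antisym) auto
  have "norm u \<le> norm ((1/2) *\<^sub>R u + (1/2) *\<^sub>R u')" using mu w by blast
  also have "\<dots> = norm (u + u') / 2"
    by (simp add: scaleR_add_right[symmetric])
  finally have "2 * norm u \<le> norm (u + u')" by simp
  then have "(2 * norm u)^2 \<le> norm (u + u')^2"
    by (intro power_mono) auto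
  then have q: "4 * norm u ^ 2 \<le> norm (u + u')^2" by (simp add: power_mult_distrib)
  have p: "norm (u + u')^2 + norm (u - u')^2 = 4 * norm u ^ 2" using parallelogram[of u u'] e by simp
  from p q zero_le_power2[of "norm (u - u')"] have "norm (u - u')^2 = 0" by linarith
  then show ?thesis by simp
qed

lemma selection:
  fixes L :: "real^'m^'n" and K :: "(real^'m) set"
  assumes K: "compact K" "convex K" "K \<noteq> {}"
  obtains f where "f \<in> borel_measurable borel"
    "\<And>y. y \<in> lin_image L K \<Longrightarrow> f y \<in> K \<and> L *v f y = y"
proof -
  define fib where "fib y = {u \<in> K. L *v u = y}" for y
  have fib_compact: "compact (fib y)" for y
  proof -
    have "closed {u. L *v u = y}"
      by (intro closed_Collect_eq linear_continuous_on[OF matrix_vector_mul_bounded_linear] continuous_on_const)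
    moreover have "fib y = K \<inter> {u. L *v u = y}" unfolding fib_def by auto
    ultimately show ?thesis using compact_Int_closed[OF K(1)] by metis
  qed
  have fib_convex: "convex (fib y)" for y
  proof -
    have "convex {u. L *v u = y}"
      unfolding convex_def by (simp add: matrix_vector_right_distrib matrix_vector_mult_scaleR flip: scaleR_add_left)
    moreover have "fib y = K \<inter> {u. L *v u = y}" unfolding fib_def by auto
    ultimately show ?thesis using convex_Int[OF K(2)] by metis
  qed
  have fib_ne: "fib y \<noteq> {}" if "y \<in> lin_image L K" for y
    using that unfolding fib_def lin_image_def by auto
  have ex_min: "\<exists>u\<in>fib y. \<forall>v\<in>fib y. norm u \<le> norm v" if "y \<in> lin_image L K" for y
    by (rule continuous_attains_inf[OF fib_compact fib_ne[OF that]]) (intro continuous_intros)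
  define mn where "mn y = (SOME u. u \<in> fib y \<and> (\<forall>v\<in>fib y. norm u \<le> norm v))" for y
  have mn: "mn y \<in> fib y \<and> (\<forall>v\<in>fib y. norm (mn y) \<le> norm v)" if "y \<in> lin_image L K" for y
    unfolding mn_def using someI_ex[OF ex_min[OF that, unfolded Bex_def]] by blast
  obtain k0 where k0: "k0 \<in> K" using K(3) by blast
  define f where "f y = (if y \<in> lin_image L K then mn y else k0)" for y
  have LK: "compact (lin_image L K)" using lin_image_props[OF K] by blast
  define E where "E q = lin_image L (K \<inter> cball 0 q)" for q
  have keyC: "f y \<in> C \<longleftrightarrow> (\<forall>q\<in>\<rat>. y \<in> E q \<longrightarrow> y \<in> lin_image L (K \<inter> C \<inter> cball 0 q))"
    if y: "y \<in> lin_image L K" and C: "closed C" for y C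
  proof
    assume fC: "f y \<in> C"
    show "\<forall>q\<in>\<rat>. y \<in> E q \<longrightarrow> y \<in> lin_image L (K \<inter> C \<inter> cball 0 q)"
    proof (intro ballI impI)
      fix q assume "y \<in> E q"
      then obtain v where v: "v \<in> K" "norm v \<le> q" "L *v v = y"
        unfolding E_def lin_image_def by auto
      then have "v \<in> fib y" unfolding fib_def by auto
      then have "norm (mn y) \<le> q" using mn[OF y] v by force
      moreover have "mn y \<in> K" "L *v mn y = y" using mn[OF y] unfolding fib_def by auto
      moreover have "f y = mn y" using y unfolding f_def by simp
      ultimately have "mn y \<in> K \<inter> C \<inter> cball 0 q" "L *v mn y = y" using fC by auto
      then show "y \<in> lin_image L (K \<inter> C \<inter> cball 0 q)"
        by (intro lin_imageI) auto
    qed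
  next
    assume H: "\<forall>q\<in>\<rat>. y \<in> E q \<longrightarrow> y \<in> lin_image L (K \<inter> C \<inter> cball 0 q)"
    define m where "m = norm (mn y)"
    define S where "S = fib y \<inter> C"
    have S: "compact S" unfolding S_def by (rule compact_Int_closed[OF fib_compact C])
    have HS: "S \<inter> cball 0 q \<noteq> {}" if "q \<in> \<rat>" "q \<ge> m" for q
    proof -
      have "y \<in> E q" using mn[OF y] that unfolding E_def lin_image_def fib_def m_def by force
      then have "y \<in> lin_image L (K \<inter> C \<inter> cball 0 q)" using H that by blast
      then show ?thesis unfolding S_def fib_def lin_image_def by auto
    qed
    obtain q1 where q1: "q1 \<in> \<rat>" "m < q1" using Rats_dense_in_real[of m "m+1"] by auto
    have "S \<inter> (\<Inter>q\<in>{q\<in>\<rat>. m < q}. cball 0 q) \<noteq> {}"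
    proof (rule compact_imp_fip_image[OF S])
      fix I' assume I': "finite I'" "I' \<subseteq> {q\<in>\<rat>. m < q}"
      define q0 where "q0 = (if I' = {} then q1 else Min I')"
      have q0: "q0 \<in> \<rat> \<and> m \<le> q0"
      proof (cases "I' = {}")
        case True then show ?thesis using q1 unfolding q0_def by auto
      next
        case False
        then have "Min I' \<in> I'" using Min_in[OF I'(1)] by blast
        then show ?thesis using False I'(2) unfolding q0_def by auto
      qed
      have "S \<inter> cball 0 q0 \<subseteq> S \<inter> (\<Inter>q\<in>I'. cball 0 q)"
      proof -
        have "q0 \<le> q" if "q \<in> I'" for q using that I'(1) unfolding q0_def by (auto intro: Min_le)
        then show ?thesis by (auto simp: mem_cball) (meson order_trans)
      qed
      then show "S \<inter> (\<Inter>q\<in>I'. cball 0 q) \<noteq> {}" using HS[of q0] q0 by blast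
    qed auto
    then obtain u where u1: "u \<in> S" and u2: "u \<in> (\<Inter>q\<in>{q\<in>\<rat>. m < q}. cball 0 q)" by blast
    have u: "u \<in> S" "\<And>q. q \<in> \<rat> \<Longrightarrow> m < q \<Longrightarrow> norm u \<le> q"
      using u1 u2 by (auto simp: mem_cball)
    have "norm u \<le> m"
    proof (rule ccontr)
      assume "\<not> norm u \<le> m"
      then obtain r where "r \<in> \<rat>" "m < r" "r < norm u" using Rats_dense_in_real[of m "norm u"] by auto
      then show False using u(2) by force
    qed
    then have "\<forall>v\<in>fib y. norm u \<le> norm v" using mn[OF y] unfolding m_def by force
    then have "u = mn y"
      using mn_unique[OF fib_convex, of u y "mn y"] u(1) mn[OF y] unfolding S_def by blast
    then show "f y \<in> C" using u(1) y unfolding S_def f_def by auto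
  qed
  have meas: "f \<in> borel_measurable borel"
  proof (rule borel_measurable_euclidean_space[THEN iffD2], rule ballI, rule borel_measurableI_le)
    fix b :: "real^'m" and a :: real
    define C where "C = {x::real^'m. x \<bullet> b \<le> a}"
    have C: "closed C" unfolding C_def by (rule closed_halfspace_component_le)
    have cl: "closed (lin_image L T)" if "compact T" "convex T" "T \<noteq> {}" for T
      using lin_image_props[OF that] compact_imp_closed by blast
    have cl': "closed (lin_image L T)" if "compact T" for T
    proof (cases "T = {}")
      case True then show ?thesis by (simp add: lin_image_def)
    next
      case False
      then show ?thesis unfolding lin_image_eq
        by (intro compact_imp_closed compact_continuous_image[OF linear_continuous_on[OF matrix_vector_mul_bounded_linear] that])
    qed
    define G where "G = (\<Inter>q\<in>\<rat>. - E q \<union> lin_image L (K \<inter> C \<inter> cball 0 q))"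
    have Gs: "G \<in> sets borel"
      unfolding G_def
    proof (rule sets.countable_INT'')
      fix q :: real
      have "E q \<in> sets borel" unfolding E_def
        by (rule borel_closed, rule cl') (simp add: compact_Int_closed K(1))
      moreover have "lin_image L (K \<inter> C \<inter> cball 0 q) \<in> sets borel"
        by (rule borel_closed, rule cl') (simp add: compact_Int_closed K(1) C)
      ultimately show "- E q \<union> lin_image L (K \<inter> C \<inter> cball 0 q) \<in> sets borel" by auto
    qed (auto simp: countable_rat)
    have "{w \<in> space borel. f w \<bullet> b \<le> a} = (lin_image L K \<inter> G) \<union> (if k0 \<in> C then - lin_image L K else {})"
      using keyC[OF _ C] unfolding C_def G_def f_def by auto
    also have "\<dots> \<in> sets borel"
      using Gs borel_closed[OF compact_imp_closed[OF LK]] by auto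
    finally show "{w \<in> space borel. f w \<bullet> b \<le> a} \<in> sets borel" .
  qed
  show ?thesis
  proof (rule that[OF meas])
    fix y assume "y \<in> lin_image L K"
    then show "f y \<in> K \<and> L *v f y = y" using mn unfolding f_def fib_def by auto
  qed
qed

lemma traj_restrict:
  fixes M :: "real^'m^'n"
  assumes u: "u \<in> trajectories T K" and t: "0 \<le> t" "t \<le> T"
  shows "(\<lambda>\<theta>. M *v u \<theta>) \<in> trajectories t (lin_image M K)"
proof -
  have "u \<in> borel_measurable (lebesgue_on {0..T})" using u unfolding trajectories_def by blast
  then have m: "u \<in> borel_measurable (lebesgue_on {0..t})"
    by (rule measurable_restrict_mono) (use t in auto)
  have c: "(\<lambda>x. M *v x) \<in> borel_measurable borel"
    by (rule borel_measurable_continuous_onI, rule linear_continuous_on, rule matrix_vector_mul_bounded_linear)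
  have "(\<lambda>\<theta>. M *v u \<theta>) \<in> borel_measurable (lebesgue_on {0..t})"
    using measurable_compose[OF m c] by simp
  moreover have "\<forall>\<theta>\<in>{0..t}. M *v u \<theta> \<in> lin_image M K"
    using u t unfolding trajectories_def by (auto intro: lin_imageI)
  ultimately show ?thesis unfolding trajectories_def by blast
qed

lemma traj_lift:
  fixes M :: "real^'m^'n"
  assumes K: "compact K" "convex K" "K \<noteq> {}"
    and s: "s \<in> trajectories t (lin_image M K)" and t: "0 \<le> t" "t \<le> T"
  obtains u where "u \<in> trajectories T K" "\<And>\<theta>. \<theta> \<in> {0..t} \<Longrightarrow> M *v u \<theta> = s \<theta>"
proof -
  obtain f where f: "f \<in> borel_measurable borel"
    "\<And>y. y \<in> lin_image M K \<Longrightarrow> f y \<in> K \<and> M *v f y = y"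
    using selection[OF K] by blast
  obtain k0 where k0: "k0 \<in> K" using K(3) by blast
  have sm: "s \<in> borel_measurable (lebesgue_on {0..t})" and sv: "\<And>\<theta>. \<theta> \<in> {0..t} \<Longrightarrow> s \<theta> \<in> lin_image M K"
    using s unfolding trajectories_def by auto
  define u where "u \<theta> = (if \<theta> \<in> {0..t} then f (s \<theta>) - k0 else 0) + k0" for \<theta>
  have g: "(\<lambda>\<theta>. f (s \<theta>) - k0) \<in> borel_measurable (lebesgue_on {0..t})"
    using measurable_compose[OF sm f(1)] by (intro borel_measurable_diff) auto
  have "(\<lambda>\<theta>. if \<theta> \<in> {0..t} then f (s \<theta>) - k0 else 0) \<in> borel_measurable lebesgue"
    by (rule borel_measurable_if_I[OF g]) simp
  then have "u \<in> borel_measurable lebesgue"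
    unfolding u_def by (intro borel_measurable_add) auto
  then have "u \<in> borel_measurable (lebesgue_on {0..T})"
    by (rule measurable_restrict_space1)
  moreover have "\<forall>\<theta>\<in>{0..T}. u \<theta> \<in> K"
    using f(2) sv k0 unfolding u_def by auto
  ultimately have "u \<in> trajectories T K" unfolding trajectories_def by blast
  moreover have "M *v u \<theta> = s \<theta>" if "\<theta> \<in> {0..t}" for \<theta>
    using f(2)[OF sv[OF that]] that unfolding u_def by auto
  ultimately show ?thesis using that by blast
qed

lemma Zchar:
  fixes A :: "real^'n^'n" and M :: "real^'m^'n"
  assumes K: "compact K" "convex K" "K \<noteq> {}" and t: "0 \<le> t" "t \<le> T"
  shows "particular_solution A (lin_image M K) t =
    {integral {0..t} (\<lambda>\<theta>. mat_exp ((t - \<theta>) *\<^sub>R A) *v (M *v u \<theta>)) | u. u \<in> trajectories T K}"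
proof (intro set_eqI iffI)
  fix z assume "z \<in> particular_solution A (lin_image M K) t"
  then obtain s where s: "s \<in> trajectories t (lin_image M K)"
    and z: "z = integral {0..t} (\<lambda>\<theta>. mat_exp ((t - \<theta>) *\<^sub>R A) *v s \<theta>)"
    unfolding particular_solution_def by blast
  obtain u where u: "u \<in> trajectories T K" "\<And>\<theta>. \<theta> \<in> {0..t} \<Longrightarrow> M *v u \<theta> = s \<theta>"
    using traj_lift[OF K s t] by blast
  have "z = integral {0..t} (\<lambda>\<theta>. mat_exp ((t - \<theta>) *\<^sub>R A) *v (M *v u \<theta>))"
    unfolding z by (rule integral_cong) (simp add: u(2))
  then show "z \<in> {integral {0..t} (\<lambda>\<theta>. mat_exp ((t - \<theta>) *\<^sub>R A) *v (M *v u \<theta>)) | u. u \<in> trajectories T K}"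
    using u(1) by blast
next
  fix z assume "z \<in> {integral {0..t} (\<lambda>\<theta>. mat_exp ((t - \<theta>) *\<^sub>R A) *v (M *v u \<theta>)) | u. u \<in> trajectories T K}"
  then obtain u where u: "u \<in> trajectories T K"
    and z: "z = integral {0..t} (\<lambda>\<theta>. mat_exp ((t - \<theta>) *\<^sub>R A) *v (M *v u \<theta>))" by blast
  have "(\<lambda>\<theta>. M *v u \<theta>) \<in> trajectories t (lin_image M K)"
    by (rule traj_restrict[OF u t])
  then show "z \<in> particular_solution A (lin_image M K) t"
    unfolding particular_solution_def z
    by (intro CollectI exI[where x="\<lambda>\<theta>. M *v u \<theta>"] conjI refl)
qed

lemma traj_int:
  fixes A :: "real^'n^'n" and M :: "real^'m^'n"
  assumes K: "compact K" "convex K" "K \<noteq> {}" and u: "u \<in> trajectories T K" and t: "0 \<le> t" "t \<le> T"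
  shows "(\<lambda>\<theta>. mat_exp ((t - \<theta>) *\<^sub>R A) *v (M *v u \<theta>)) integrable_on {0..t}"
proof -
  have tr: "(\<lambda>\<theta>. M *v u \<theta>) \<in> trajectories t (lin_image M K)"
    by (rule traj_restrict[OF u t])
  have "bounded (lin_image M K)" using lin_image_props[OF K] compact_imp_bounded by blast
  then obtain R where R: "\<And>x. x \<in> lin_image M K \<Longrightarrow> norm x \<le> R" unfolding bounded_iff by blast
  show ?thesis
    by (rule integrand_int[where R=R]) (use tr R in \<open>auto simp: trajectories_def\<close>)
qed

lemma mat_exp_cancel:
  fixes X :: "real^'n^'n"
  shows "mat_exp (- X) *v (mat_exp X *v x) = x"
  by (simp add: matrix_vector_mul_assoc mat_exp_inv)

theorem proposition5:
  fixes A :: "real^'n^'n" and B :: "real^'m^'n" and E :: "real^'r^'n"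
    and U :: "(real^'m) set" and W :: "(real^'r) set" and Xend :: "(real^'n) set"
    and t_end t :: real
  assumes "zonotope U" and "zonotope W" and "polytope_H Xend"
    and "t \<in> {0..t_end}"
  shows "EA_backward_reach A B E U W Xend t_end t =
         lin_image (mat_exp ((- t) *\<^sub>R A))
           ((Xend \<ominus>\<^sub>M particular_solution A (lin_image E W) t)
              \<oplus>\<^sub>M uminus ` particular_solution A (lin_image B U) t)"
proof -
  have t: "0 \<le> t" "t \<le> t_end" using assms(4) by auto
  note UP = zonotope_props[OF assms(1)]
  note WP = zonotope_props[OF assms(2)]
  define IU where "IU u = integral {0..t} (\<lambda>\<theta>. mat_exp ((t - \<theta>) *\<^sub>R A) *v (B *v u \<theta>))" for u
  define IW where "IW w = integral {0..t} (\<lambda>\<theta>. mat_exp ((t - \<theta>) *\<^sub>R A) *v (E *v w \<theta>))" for w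
  define e where "e = mat_exp (t *\<^sub>R A)"
  define e' where "e' = mat_exp ((- t) *\<^sub>R A)"
  have ee1: "e' *v (e *v x) = x" for x
    unfolding e_def e'_def using mat_exp_cancel[of "t *\<^sub>R A" x] by simp
  have ee2: "e *v (e' *v x) = x" for x
    unfolding e_def e'_def using mat_exp_cancel[of "- (t *\<^sub>R A)" x] by simp
  have ZU: "particular_solution A (lin_image B U) t = {IU u | u. u \<in> trajectories t_end U}"
    unfolding IU_def by (rule Zchar[OF UP t])
  have ZW: "particular_solution A (lin_image E W) t = {IW w | w. w \<in> trajectories t_end W}"
    unfolding IW_def by (rule Zchar[OF WP t])
  have xi: "xi A B E t x0 u w = e *v x0 + IU u + IW w"
    if u: "u \<in> trajectories t_end U" and w: "w \<in> trajectories t_end W" for x0 u w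
  proof -
    have "integral {0..t} (\<lambda>\<theta>. mat_exp ((t - \<theta>) *\<^sub>R A) *v (B *v u \<theta> + E *v w \<theta>))
        = integral {0..t} (\<lambda>\<theta>. mat_exp ((t - \<theta>) *\<^sub>R A) *v (B *v u \<theta>) + mat_exp ((t - \<theta>) *\<^sub>R A) *v (E *v w \<theta>))"
      by (simp add: matrix_vector_right_distrib)
    also have "\<dots> = IU u + IW w"
      unfolding IU_def IW_def
      by (rule integral_add[OF traj_int[OF UP u t] traj_int[OF WP w t]])
    finally show ?thesis unfolding xi_def e_def by (simp add: add.assoc)
  qed
  show ?thesis
  proof (intro set_eqI iffI)
    fix x0 assume "x0 \<in> EA_backward_reach A B E U W Xend t_end t"
    then obtain u where u: "u \<in> trajectories t_end U"
      and H: "\<And>w. w \<in> trajectories t_end W \<Longrightarrow> xi A B E t x0 u w \<in> Xend"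
      unfolding EA_backward_reach_def by blast
    define y where "y = e *v x0 + IU u"
    have "{y} \<oplus>\<^sub>M particular_solution A (lin_image E W) t \<subseteq> Xend"
    proof
      fix z assume "z \<in> {y} \<oplus>\<^sub>M particular_solution A (lin_image E W) t"
      then obtain w where w: "w \<in> trajectories t_end W" and z: "z = y + IW w"
        unfolding mink_sum_def ZW by blast
      show "z \<in> Xend" using H[OF w] xi[OF u w, of x0] unfolding z y_def by simp
    qed
    then have y: "y \<in> Xend \<ominus>\<^sub>M particular_solution A (lin_image E W) t"
      unfolding mink_diff_def by blast
    have "- IU u \<in> uminus ` particular_solution A (lin_image B U) t"
      unfolding ZU using u by blast
    then have "e *v x0 \<in> (Xend \<ominus>\<^sub>M particular_solution A (lin_image E W) t) \<oplus>\<^sub>M uminus ` particular_solution A (lin_image B U) t"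
      using y unfolding mink_sum_def y_def by force
    then show "x0 \<in> lin_image (mat_exp ((- t) *\<^sub>R A))
           ((Xend \<ominus>\<^sub>M particular_solution A (lin_image E W) t) \<oplus>\<^sub>M uminus ` particular_solution A (lin_image B U) t)"
    proof -
      assume a: "e *v x0 \<in> (Xend \<ominus>\<^sub>M particular_solution A (lin_image E W) t) \<oplus>\<^sub>M uminus ` particular_solution A (lin_image B U) t"
      have "mat_exp ((- t) *\<^sub>R A) *v (e *v x0) = x0" using ee1[of x0] unfolding e'_def .
      from lin_imageI[OF a this] show ?thesis .
    qed
  next
    fix x0 assume "x0 \<in> lin_image (mat_exp ((- t) *\<^sub>R A))
           ((Xend \<ominus>\<^sub>M particular_solution A (lin_image E W) t) \<oplus>\<^sub>M uminus ` particular_solution A (lin_image B U) t)"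
    then obtain p where p: "p \<in> (Xend \<ominus>\<^sub>M particular_solution A (lin_image E W) t) \<oplus>\<^sub>M uminus ` particular_solution A (lin_image B U) t"
      and x0: "x0 = e' *v p"
      unfolding e'_def by (auto elim: lin_imageE)
    then obtain y z where y: "y \<in> Xend \<ominus>\<^sub>M particular_solution A (lin_image E W) t"
      and z: "z \<in> uminus ` particular_solution A (lin_image B U) t" and pyz: "p = y + z"
      unfolding mink_sum_def by blast
    obtain u where u: "u \<in> trajectories t_end U" and zu: "z = - IU u"
      using z unfolding ZU by blast
    have ex0: "e *v x0 = p" unfolding x0 by (rule ee2)
    have "xi A B E t x0 u w \<in> Xend" if w: "w \<in> trajectories t_end W" for w
    proof -
      have "y + IW w \<in> {y} \<oplus>\<^sub>M particular_solution A (lin_image E W) t"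
        unfolding mink_sum_def ZW using w by blast
      then have "y + IW w \<in> Xend" using y unfolding mink_diff_def by blast
      then show ?thesis using xi[OF u w, of x0] ex0 pyz zu by simp
    qed
    then show "x0 \<in> EA_backward_reach A B E U W Xend t_end t"
      unfolding EA_backward_reach_def using u by blast
  qed
qed

end
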